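(* Let $\mathcal{S}=\{c\in\mathbb{M}_2: 0\le c\le 1,\ \operatorname{trace}(c)=1,\ 0<\det(c)<\tfrac14\}$, and let $a,b\in\mathcal{S}$. Then $a$ is absolutely compatible with $b$ if, and only if, there exists a unitary $u\in\mathbb{M}_2$ such that $$u^*au=\begin{pmatrix} t&\alpha\\ \bar\alpha & 1-t\end{pmatrix},\qquad u^*bu=\begin{pmatrix} s&\beta\\ \bar\beta&1-s\end{pmatrix},$$ where $\beta=-\alpha\ne0$, $s,t\in(0,1)$, $|\alpha|^2<t(1-t)$, and either $s=\frac{|\alpha|^2}{t}$ or $s=1-\frac{|\alpha|^2}{1-t}$.
   Context: $\mathbb{M}_2$ is the algebra of $2\times2$ complex matrices; $\operatorname{trace}$ is the non-normalized trace. For $x\in\mathbb{M}_2$, $|x|=(x^*x)^{1/2}$. Elements $0\le a,b\le 1$ are absolutely compatible if $|a-b|+|1-a-b|=1$. Equivalently, $\mathcal{S}=\left\{\begin{pmatrix} t&\alpha\\ \bar\alpha&1-t\end{pmatrix}: t\in(0,1),\ \alpha\in\mathbb{C},\ |\alpha|^2<t(1-t)\right\}\setminus\{\tfrac12 1\}$. *)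

theory Defs
  imports "HOL-Analysis.Analysis"
begin

type_synonym M2 = "complex^2^2"

definition adj :: "M2 \<Rightarrow> M2" where
  "adj A = (\<chi> i j. cnj (A $ j $ i))"

definition qform :: "M2 \<Rightarrow> complex^2 \<Rightarrow> complex" where
  "qform A v = (\<Sum>i\<in>UNIV. cnj (v $ i) * (A *v v) $ i)"

definition psd :: "M2 \<Rightarrow> bool" where
  "psd A \<longleftrightarrow> adj A = A \<and> (\<forall>v. 0 \<le> Re (qform A v))"

definition mtrace :: "M2 \<Rightarrow> complex" where
  "mtrace A = A $ 1 $ 1 + A $ 2 $ 2"

definition mabs :: "M2 \<Rightarrow> M2" where
  "mabs x = (THE p. psd p \<and> p ** p = adj x ** x)"

definition unitary :: "M2 \<Rightarrow> bool" where
  "unitary u \<longleftrightarrow> adj u ** u = mat 1"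

definition abs_compatible :: "M2 \<Rightarrow> M2 \<Rightarrow> bool" where
  "abs_compatible a b \<longleftrightarrow> mabs (a - b) + mabs (mat 1 - a - b) = mat 1"

definition mat2 :: "complex \<Rightarrow> complex \<Rightarrow> complex \<Rightarrow> complex \<Rightarrow> M2" where
  "mat2 p q r s = (\<chi> i j. if i = 1 then (if j = 1 then p else q) else (if j = 1 then r else s))"

text \<open>The set S. det c of a positive matrix is real; we require it explicitly.\<close>
definition setS :: "M2 set" where
  "setS = {c. psd c \<and> psd (mat 1 - c) \<and> mtrace c = 1 \<and> Im (det c) = 0
             \<and> 0 < Re (det c) \<and> Re (det c) < 1/4}"

end

theory Submission
  imports Defs
begin

lemma two_neq: "(1::2) \<noteq> 2" by simp

lemma mat2_eta: "(x::M2) = mat2 (x$1$1) (x$1$2) (x$2$1) (x$2$2)"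
  unfolding mat2_def
  by (simp add: vec_eq_iff forall_2)

lemma mat2_nth: "mat2 p q r s $ 1 $ 1 = p" "mat2 p q r s $ 1 $ 2 = q"
  "mat2 p q r s $ 2 $ 1 = r" "mat2 p q r s $ 2 $ 2 = s"
  unfolding mat2_def by simp_all

lemma mat2_eq: "mat2 p q r s = mat2 p' q' r' s' \<longleftrightarrow> p = p' \<and> q = q' \<and> r = r' \<and> s = s'"
  by (metis mat2_nth)

lemma mat2_mult: "mat2 a b c d ** mat2 e f g h = mat2 (a*e+b*g) (a*f+b*h) (c*e+d*g) (c*f+d*h)"
  unfolding matrix_matrix_mult_def mat2_def
  by (simp add: vec_eq_iff forall_2 sum_2)

lemma mat2_adj: "adj (mat2 a b c d) = mat2 (cnj a) (cnj c) (cnj b) (cnj d)"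
  unfolding adj_def mat2_def
  by (simp add: vec_eq_iff forall_2)

lemma mat2_add: "mat2 a b c d + mat2 e f g h = mat2 (a+e) (b+f) (c+g) (d+h)"
  unfolding mat2_def by (simp add: vec_eq_iff forall_2)

lemma mat2_sub: "mat2 a b c d - mat2 e f g h = mat2 (a-e) (b-f) (c-g) (d-h)"
  unfolding mat2_def by (simp add: vec_eq_iff forall_2)

lemma mat2_mat: "mat k = mat2 k 0 0 k"
  unfolding mat2_def mat_def by (simp add: vec_eq_iff forall_2)

lemma mat2_det: "det (mat2 a b c d) = a*d - b*c"
  by (simp add: det_2 mat2_nth)

lemma mat2_trace: "mtrace (mat2 a b c d) = a + d"
  by (simp add: mtrace_def mat2_nth)

lemma mat2_qform: "qform (mat2 a b c d) v = cnj (v$1) * (a * v$1 + b * v$2) + cnj (v$2) * (c * v$1 + d * v$2)"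
  unfolding qform_def matrix_vector_mult_def mat2_def by (simp add: sum_2)


lemma psd_scalar_unique:
  assumes p: "psd p" and pp: "p ** p = mat (of_real (m^2))" and m: "m \<ge> 0"
  shows "p = mat (of_real m)"
proof -
  define a b c d where "a = p$1$1" "b = p$1$2" "c = p$2$1" "d = p$2$2"
  have pe: "p = mat2 a b c d" using mat2_eta a_b_c_d_def by metis
  have herm: "adj p = p" and qf: "\<And>v. 0 \<le> Re (qform p v)" using p psd_def by auto
  from herm have hc: "c = cnj b" "cnj a = a" "cnj d = d" unfolding pe mat2_adj mat2_eq by auto
  define x y where "x = Re a" "y = Re d"
  have ax: "a = of_real x" using hc(2) x_y_def by (metis Reals_cnj_iff complex_is_Real_iff of_real_Re)
  have dy: "d = of_real y" using hc(3) x_y_def by (metis Reals_cnj_iff complex_is_Real_iff of_real_Re)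
  have q1: "x \<ge> 0"
    using qf[of "\<chi> i. if i = 1 then 1 else 0"] unfolding pe mat2_qform by (simp add: ax)
  have q2: "y \<ge> 0"
    using qf[of "\<chi> i. if i = 1 then 0 else 1"] unfolding pe mat2_qform by (simp add: dy)
  have eqs: "a*a + b*c = of_real (m^2)" "a*b+b*d = 0" "c*a+d*c = 0" "c*b+d*d = of_real (m^2)"
    using pp unfolding pe mat2_mult mat2_mat mat2_eq by auto
  have b0: "b = 0"
  proof (rule ccontr)
    assume bn: "b \<noteq> 0"
    from eqs(2) have "b * (a + d) = 0" by (simp add: algebra_simps)
    with bn have "a + d = 0" by simp
    hence "x + y = 0" using ax dy by (metis of_real_add of_real_eq_0_iff)
    hence x0: "x = 0" "y = 0" using q1 q2 by auto
    have "Re (qform p (\<chi> i. if i = 1 then 1 else - cnj b)) = - 2 * (cmod b)^2"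
      unfolding pe mat2_qform using x0 ax dy hc(1)
      by (simp add: complex_norm_square[symmetric] algebra_simps)
    moreover have "cmod b > 0" using bn by simp
    ultimately show False using qf[of "\<chi> i. if i = 1 then 1 else - cnj b"] by simp
  qed
  have "of_real (x^2) = (of_real (m^2) :: complex)" using eqs(1) b0 ax by (simp add: power2_eq_square)
  hence "x^2 = m^2" using of_real_eq_iff by blast
  hence xm: "x = m" using q1 m by (auto simp: power2_eq_iff)
  have "of_real (y^2) = (of_real (m^2) :: complex)" using eqs(4) b0 dy by (simp add: power2_eq_square)
  hence "y^2 = m^2" using of_real_eq_iff by blast
  hence ym: "y = m" using q2 m by (auto simp: power2_eq_iff)
  show ?thesis unfolding pe mat2_mat using ax dy xm ym b0 hc(1) by simp
qed

lemma psd_scalar: "m \<ge> 0 \<Longrightarrow> psd (mat (of_real m))"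
  unfolding psd_def mat2_mat mat2_adj mat2_qform
  by (simp add: complex_norm_square[symmetric] algebra_simps)


lemma mat2_obtain: obtains a b c d where "(x::M2) = mat2 a b c d"
  using mat2_eta by blast

lemma herm_form:
  assumes "adj x = x"
  shows "\<exists>p r b. x = mat2 (of_real p) b (cnj b) (of_real r)"
proof -
  obtain a b c d where x: "x = mat2 a b c d" using mat2_obtain by blast
  have h: "cnj a = a" "cnj c = b" "cnj b = c" "cnj d = d"
    using assms unfolding x mat2_adj mat2_eq by auto
  have "a = of_real (Re a)" "d = of_real (Re d)" using h(1,4)
    by (simp_all add: complex_eq_iff)
  hence "x = mat2 (of_real (Re a)) b (cnj b) (of_real (Re d))" using x h(3) by simp
  thus ?thesis by blast
qed


lemma bcnj1: "b * cnj b = of_real (cmod b) * of_real (cmod b)"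
  using complex_norm_square[of b] by (simp add: power2_eq_square)

lemma bcnj: "b * cnj b = of_real (cmod b) * of_real (cmod b)" "cnj b * b = of_real (cmod b) * of_real (cmod b)"
  using bcnj1[of b] by (simp_all add: mult.commute)

lemma herm_tl_form:
  assumes "adj x = x" "mtrace x = 0"
  shows "\<exists>p b. x = mat2 (of_real p) b (cnj b) (- of_real p)"
proof -
  obtain p r b where x: "x = mat2 (of_real p) b (cnj b) (of_real r)" using herm_form assms(1) by blast
  hence "of_real p + of_real r = (0::complex)" using assms(2) by (simp add: mat2_trace)
  hence "p + r = 0" by (metis of_real_add of_real_eq_0_iff)
  hence "r = -p" by simp
  thus ?thesis using x by auto
qed

lemma mat_sq: "mat (of_real m) ** mat (of_real m) = (mat (of_real (m^2)) :: M2)"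
  unfolding mat2_mat mat2_mult by (simp add: power2_eq_square)

lemma mabs_explicit:
  "mabs (mat2 (of_real p) b (cnj b) (- of_real p)) = mat (of_real (sqrt (p^2 + (cmod b)^2)))"
proof -
  let ?x = "mat2 (of_real p) b (cnj b) (- of_real p)"
  let ?m = "sqrt (p^2 + (cmod b)^2)"
  have m0: "?m \<ge> 0" by simp
  have sq: "?m^2 = p^2 + (cmod b)^2" by simp
  have xx: "adj ?x ** ?x = mat (of_real (?m^2))"
    unfolding sq mat2_adj mat2_mult mat2_mat
    by (simp add: mat2_eq bcnj power2_eq_square algebra_simps)
  have mm: "mat (of_real ?m) ** mat (of_real ?m) = (mat (of_real (?m^2)) :: M2)"
    by (rule mat_sq)
  have eq: "\<And>q. psd q \<and> q ** q = adj ?x ** ?x \<longleftrightarrow> q = mat (of_real ?m)"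
  proof
    fix q assume "psd q \<and> q ** q = adj ?x ** ?x"
    thus "q = mat (of_real ?m)" using psd_scalar_unique[OF _ _ m0] xx by simp
  next
    fix q :: M2 assume "q = mat (of_real ?m)"
    thus "psd q \<and> q ** q = adj ?x ** ?x" using psd_scalar[OF m0] mm xx by simp
  qed
  show ?thesis unfolding mabs_def using eq by simp
qed

lemma det_explicit: "det (mat2 (of_real p) b (cnj b) (- of_real p)) = - of_real (p^2 + (cmod b)^2)"
  by (simp add: mat2_det bcnj power2_eq_square algebra_simps)

lemma mabs_det:
  assumes "adj x = x" "mtrace x = 0"
  shows "mabs x = mat (of_real (sqrt (- Re (det x))))"
proof -
  obtain p b where x: "x = mat2 (of_real p) b (cnj b) (- of_real p)" using herm_tl_form assms by blast
  show ?thesis unfolding x mabs_explicit det_explicit by (simp add: add.commute)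
qed

lemma det_unitary_conj:
  assumes "unitary u" shows "det (adj u ** x ** u) = det x"
proof -
  have "det (adj u ** u) = 1" using assms unfolding unitary_def by simp
  hence "det (adj u) * det u = 1" by (simp add: det_mul)
  thus ?thesis by (simp add: det_mul algebra_simps)
qed

lemma conj_sub: "adj u ** x ** u - adj u ** y ** u = adj u ** (x - y) ** u"
proof -
  obtain a b c d where u: "u = mat2 a b c d" using mat2_obtain by blast
  obtain a1 b1 c1 d1 where x: "x = mat2 a1 b1 c1 d1" using mat2_obtain by blast
  obtain a2 b2 c2 d2 where y: "y = mat2 a2 b2 c2 d2" using mat2_obtain by blast
  show ?thesis unfolding u x y mat2_adj mat2_mult mat2_sub mat2_eq by (simp add: algebra_simps)
qed

lemma conj_add: "adj u ** x ** u + adj u ** y ** u = adj u ** (x + y) ** u"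
proof -
  obtain a b c d where u: "u = mat2 a b c d" using mat2_obtain by blast
  obtain a1 b1 c1 d1 where x: "x = mat2 a1 b1 c1 d1" using mat2_obtain by blast
  obtain a2 b2 c2 d2 where y: "y = mat2 a2 b2 c2 d2" using mat2_obtain by blast
  show ?thesis unfolding u x y mat2_adj mat2_mult mat2_add mat2_eq by (simp add: algebra_simps)
qed

lemma conj_one: "unitary u \<Longrightarrow> adj u ** mat 1 ** u = mat 1"
  unfolding unitary_def by simp

lemma mat_sum_one: "mat (of_real c) + mat (of_real d) = (mat 1 :: M2) \<longleftrightarrow> c + d = 1"
proof -
  have "mat (of_real c) + mat (of_real d) = (mat (of_real (c + d)) :: M2)"
    unfolding mat2_mat mat2_add by simp
  moreover have "(mat (of_real (c + d)) :: M2) = mat 1 \<longleftrightarrow> c + d = 1"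
    unfolding mat2_mat mat2_eq by (metis of_real_eq_1_iff)
  ultimately show ?thesis by simp
qed

lemma herm_diff: "adj x = x \<Longrightarrow> adj y = y \<Longrightarrow> adj (x - y) = x - y"
proof -
  obtain a1 b1 c1 d1 where x: "x = mat2 a1 b1 c1 d1" using mat2_obtain by blast
  obtain a2 b2 c2 d2 where y: "y = mat2 a2 b2 c2 d2" using mat2_obtain by blast
  show "adj x = x \<Longrightarrow> adj y = y \<Longrightarrow> adj (x - y) = x - y"
    unfolding x y mat2_adj mat2_sub mat2_eq by simp
qed

lemma trace_diff: "mtrace (x - y) = mtrace x - mtrace y"
  unfolding mtrace_def by simp

lemma adj_one: "adj (mat 1) = mat 1"
  unfolding mat2_mat mat2_adj by simp

lemma trace_one: "mtrace (mat 1) = 2"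
  unfolding mat2_mat mat2_trace by simp


lemma diag_exists:
  "\<exists>u. unitary u \<and> (adj u ** mat2 (of_real p) q (cnj q) (- of_real p) ** u) $ 1 $ 2 = 0"
proof (cases "q = 0")
  case True
  have "unitary (mat 1)" unfolding unitary_def adj_one by simp
  thus ?thesis using True by (intro exI[of _ "mat 1"]) (simp add: mat2_nth adj_one)
next
  case False
  define m where "m = sqrt (p^2 + (cmod q)^2)"
  define r where "r = m - p"
  define n where "n = sqrt ((cmod q)^2 + r^2)"
  have cq: "cmod q > 0" using False by simp
  have m2: "m^2 = p^2 + (cmod q)^2" unfolding m_def by simp
  have "m^2 > p^2" using m2 cq by simp
  have "sqrt (p^2) < m" unfolding m_def using cq by (intro real_sqrt_less_mono) simp
  hence "m > p" by simp
  hence r0: "r > 0" unfolding r_def by simp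
  have "r^2 > 0" using r0 by simp
  hence n0: "n > 0" unfolding n_def by (simp add: add_nonneg_pos)
  have n2: "n^2 = (cmod q)^2 + r^2" unfolding n_def by simp
  have key: "(cmod q)^2 - 2*p*r - r^2 = 0" using m2 unfolding r_def by (simp add: power2_eq_square algebra_simps)
  define u where "u = mat2 (q / of_real n) (- of_real r / of_real n) (of_real r / of_real n) (cnj q / of_real n)"
  have "adj u ** u = mat2 ((q * cnj q + of_real r * of_real r) / (of_real n * of_real n)) 0 0
                          ((q * cnj q + of_real r * of_real r) / (of_real n * of_real n))"
    unfolding u_def mat2_adj mat2_mult mat2_eq using n0 by (simp add: field_simps)
  also have "\<dots> = mat 1" unfolding mat2_mat mat2_eq bcnj using n0 n2 False
    by (simp add: power2_eq_square field_simps flip: of_real_mult of_real_add)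
  finally have U: "unitary u" unfolding unitary_def .
  have "(adj u ** mat2 (of_real p) q (cnj q) (- of_real p) ** u) $ 1 $ 2 =
        cnj q / (of_real n * of_real n) * (q * cnj q - 2 * of_real p * of_real r - of_real r * of_real r)"
    unfolding u_def mat2_adj mat2_mult mat2_nth using n0 by (simp add: field_simps)
  also have "\<dots> = 0"
  proof -
    have "q * cnj q - 2 * of_real p * of_real r - of_real r * of_real r = of_real ((cmod q)^2 - 2*p*r - r^2)"
      by (simp add: bcnj power2_eq_square)
    thus ?thesis using key by simp
  qed
  finally show ?thesis using U by blast
qed


lemma adj_conj: "adj (adj u ** x ** u) = adj u ** adj x ** u"
proof -
  obtain a b c d where u: "u = mat2 a b c d" using mat2_obtain by blast
  obtain a1 b1 c1 d1 where x: "x = mat2 a1 b1 c1 d1" using mat2_obtain by blast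
  show ?thesis unfolding u x mat2_adj mat2_mult mat2_eq by (simp add: algebra_simps)
qed

lemma trace_comm: "mtrace (x ** y) = mtrace (y ** x)"
proof -
  obtain a b c d where u: "x = mat2 a b c d" using mat2_obtain by blast
  obtain a1 b1 c1 d1 where x: "y = mat2 a1 b1 c1 d1" using mat2_obtain by blast
  show ?thesis unfolding u x mat2_trace mat2_mult by (simp add: algebra_simps)
qed

lemma trace_conj: assumes "unitary u" shows "mtrace (adj u ** x ** u) = mtrace x"
proof -
  have "u ** adj u = mat 1" using assms unfolding unitary_def by (simp add: matrix_left_right_inverse)
  have "mtrace (adj u ** x ** u) = mtrace (adj u ** (x ** u))" by (simp add: matrix_mul_assoc)
  also have "\<dots> = mtrace (x ** u ** adj u)" by (simp add: trace_comm)
  also have "\<dots> = mtrace x" using \<open>u ** adj u = mat 1\<close> by (simp add: matrix_mul_assoc[symmetric])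
  finally show ?thesis .
qed

lemma herm_tr1_form:
  assumes "adj x = x" "mtrace x = 1"
  shows "\<exists>t \<alpha>. x = mat2 (of_real t) \<alpha> (cnj \<alpha>) (of_real (1 - t))"
proof -
  obtain p r b where x: "x = mat2 (of_real p) b (cnj b) (of_real r)" using herm_form assms(1) by blast
  hence "of_real p + of_real r = (1::complex)" using assms(2) by (simp add: mat2_trace)
  hence "p + r = 1" by (metis of_real_add of_real_eq_1_iff)
  hence "r = 1 - p" by simp
  thus ?thesis using x by auto
qed

lemma AC_conj:
  assumes ha: "adj a = a" and hb: "adj b = b" and ta: "mtrace a = 1" and tb: "mtrace b = 1"
    and u: "unitary u"
  shows "abs_compatible a b \<longleftrightarrow>
    sqrt (- Re (det (adj u ** a ** u - adj u ** b ** u)))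
    + sqrt (- Re (det (mat 1 - adj u ** a ** u - adj u ** b ** u))) = 1"
proof -
  have h1: "adj (a - b) = a - b" using herm_diff[OF ha hb] .
  have h2: "adj (mat 1 - a - b) = mat 1 - a - b" using herm_diff[OF herm_diff[OF adj_one ha] hb] .
  have t1: "mtrace (a - b) = 0" using ta tb by (simp add: trace_diff)
  have t2: "mtrace (mat 1 - a - b) = 0" using ta tb by (simp add: trace_diff trace_one)
  have e1: "adj u ** a ** u - adj u ** b ** u = adj u ** (a - b) ** u" by (rule conj_sub)
  have e2: "mat 1 - adj u ** a ** u - adj u ** b ** u = adj u ** (mat 1 - a - b) ** u"
    using conj_sub[of u "mat 1" a] conj_sub[of u "mat 1 - a" b] conj_one[OF u] by simp
  show ?thesis
    unfolding abs_compatible_def mabs_det[OF h1 t1] mabs_det[OF h2 t2] mat_sum_one e1 e2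
      det_unitary_conj[OF u] ..
qed

lemma det_diff_explicit:
  "- Re (det (mat2 (of_real t) \<alpha> (cnj \<alpha>) (of_real (1 - t)) - mat2 (of_real s) (- \<alpha>) (cnj (- \<alpha>)) (of_real (1 - s))))
    = (t - s)^2 + 4 * (cmod \<alpha>)^2"
proof -
  have E: "mat2 (of_real t) \<alpha> (cnj \<alpha>) (of_real (1 - t)) - mat2 (of_real s) (- \<alpha>) (cnj (- \<alpha>)) (of_real (1 - s))
      = mat2 (of_real (t - s)) (2 * \<alpha>) (cnj (2 * \<alpha>)) (- of_real (t - s))"
    unfolding mat2_sub mat2_eq by (simp add: algebra_simps)
  have N: "cmod (2 * \<alpha>) = 2 * cmod \<alpha>" by (simp add: norm_mult)
  show ?thesis unfolding E det_explicit N by (simp add: power2_eq_square)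
qed

lemma det_sum_explicit:
  "- Re (det (mat 1 - mat2 (of_real t) \<alpha> (cnj \<alpha>) (of_real (1 - t)) - mat2 (of_real s) (- \<alpha>) (cnj (- \<alpha>)) (of_real (1 - s))))
    = (1 - t - s)^2"
proof -
  have E: "mat 1 - mat2 (of_real t) \<alpha> (cnj \<alpha>) (of_real (1 - t)) - mat2 (of_real s) (- \<alpha>) (cnj (- \<alpha>)) (of_real (1 - s))
      = mat2 (of_real (1 - t - s)) 0 (cnj 0) (- of_real (1 - t - s))"
    unfolding mat2_mat mat2_sub mat2_eq by (simp add: algebra_simps)
  show ?thesis unfolding E det_explicit by simp
qed


lemma det_tr1: "det (mat2 (of_real t) \<alpha> (cnj \<alpha>) (of_real (1 - t))) = of_real (t * (1 - t) - (cmod \<alpha>)^2)"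
  by (simp add: mat2_det bcnj power2_eq_square)

lemma pos_interval: assumes "(0::real) < t * (1 - t)" shows "0 < t" "t < 1"
proof -
  show "0 < t"
  proof (rule ccontr)
    assume "\<not> 0 < t" hence "t \<le> 0" by simp
    hence "t * (1 - t) \<le> 0" by (simp add: mult_nonpos_nonneg)
    thus False using assms by simp
  qed
  show "t < 1"
  proof (rule ccontr)
    assume "\<not> t < 1" hence "1 - t \<le> 0" by simp
    moreover have "t \<ge> 0" using \<open>\<not> t < 1\<close> by simp
    ultimately have "t * (1 - t) \<le> 0" by (simp add: mult_nonneg_nonpos)
    thus False using assms by simp
  qed
qed

lemma real_back:
  fixes t s A :: real
  assumes t: "0 < t" "t < 1" and A: "A < t * (1 - t)" "0 \<le> A"
    and s: "s = A / t \<or> s = 1 - A / (1 - t)"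
  shows "sqrt ((t - s)^2 + 4 * A) + sqrt ((1 - t - s)^2) = 1"
  using s
proof
  assume s1: "s = A / t"
  have ts: "t * s = A" using s1 t by simp
  have "(t - s)^2 + 4 * A = (t + s)^2" using ts by (simp add: power2_eq_square algebra_simps)
  moreover have "s \<ge> 0" using s1 t A by simp
  moreover have "s < 1 - t"
  proof -
    have "t * s < t * (1 - t)" using ts A by simp
    thus ?thesis using t by simp
  qed
  ultimately show ?thesis using t by simp
next
  assume s2: "s = 1 - A / (1 - t)"
  have ts: "(1 - t) * (1 - s) = A" using s2 t by simp
  have "(t - s)^2 + 4 * A = (2 - t - s)^2" using ts by (simp add: power2_eq_square algebra_simps)
  moreover have "1 - s \<ge> 0" using s2 t A by simp
  moreover have "1 - s < t"
  proof -
    have "(1 - t) * (1 - s) < (1 - t) * t" using ts A by (simp add: mult.commute)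
    thus ?thesis using t by simp
  qed
  ultimately show ?thesis using t by simp
qed

lemma real_fwd:
  fixes t s A :: real
  assumes e: "sqrt ((t - s)^2 + 4 * A) + sqrt ((1 - t - s)^2) = 1"
    and A: "0 \<le> A" "A < t * (1 - t)" "A < s * (1 - s)"
  shows "0 < A \<and> 0 < t \<and> t < 1 \<and> 0 < s \<and> s < 1 \<and> (s = A / t \<or> s = 1 - A / (1 - t))"
proof -
  have t: "0 < t" "t < 1" using pos_interval[of t] A by linarith+
  have s: "0 < s" "s < 1" using pos_interval[of s] A by linarith+
  show ?thesis
  proof (cases "t + s \<le> 1")
    case True
    hence "sqrt ((t - s)^2 + 4 * A) = t + s" using e by simp
    moreover have "(t - s)^2 + 4 * A = (sqrt ((t - s)^2 + 4 * A))^2" using A(1) by simp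
    ultimately have "(t - s)^2 + 4 * A = (t + s)^2" by simp
    hence ts: "A = t * s" by (simp add: power2_eq_square algebra_simps)
    hence "0 < A" using t s by simp
    moreover have "s = A / t" using ts t by simp
    ultimately show ?thesis using t s by simp
  next
    case False
    hence "sqrt ((t - s)^2 + 4 * A) = 2 - t - s" using e by simp
    moreover have "(t - s)^2 + 4 * A = (sqrt ((t - s)^2 + 4 * A))^2" using A(1) by simp
    ultimately have "(t - s)^2 + 4 * A = (2 - t - s)^2" by simp
    hence ts: "A = (1 - t) * (1 - s)" by (simp add: power2_eq_square algebra_simps)
    hence "0 < A" using t s by simp
    moreover have "s = 1 - A / (1 - t)" using ts t by simp
    ultimately show ?thesis using t s by simp
  qed
qed


lemma setS_props:
  assumes "c \<in> setS"
  shows "adj c = c" "mtrace c = 1" "0 < Re (det c)"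
  using assms unfolding setS_def psd_def by auto

theorem theorem3p5:
  fixes a b :: M2
  assumes "a \<in> setS" and "b \<in> setS"
  shows "abs_compatible a b \<longleftrightarrow>
    (\<exists>u \<alpha> (t::real) (s::real). unitary u
       \<and> adj u ** a ** u = mat2 (of_real t) \<alpha> (cnj \<alpha>) (of_real (1 - t))
       \<and> adj u ** b ** u = mat2 (of_real s) (- \<alpha>) (cnj (- \<alpha>)) (of_real (1 - s))
       \<and> - \<alpha> \<noteq> 0 \<and> 0 < s \<and> s < 1 \<and> 0 < t \<and> t < 1
       \<and> (cmod \<alpha>)\<^sup>2 < t * (1 - t)
       \<and> (s = (cmod \<alpha>)\<^sup>2 / t \<or> s = 1 - (cmod \<alpha>)\<^sup>2 / (1 - t)))"
proof -
  note A = setS_props[OF assms(1)] and B = setS_props[OF assms(2)]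
  show ?thesis
  proof
    assume ac: "abs_compatible a b"
    have h2: "adj (mat 1 - a - b) = mat 1 - a - b" using herm_diff[OF herm_diff[OF adj_one A(1)] B(1)] .
    have t2: "mtrace (mat 1 - a - b) = 0" using A B by (simp add: trace_diff trace_one)
    obtain p q where hq: "mat 1 - a - b = mat2 (of_real p) q (cnj q) (- of_real p)"
      using herm_tl_form[OF h2 t2] by blast
    obtain u where u: "unitary u" and u12: "(adj u ** (mat 1 - a - b) ** u) $ 1 $ 2 = 0"
      using diag_exists[of p q] unfolding hq[symmetric] by blast
    have e2: "mat 1 - adj u ** a ** u - adj u ** b ** u = adj u ** (mat 1 - a - b) ** u"
      using conj_sub[of u "mat 1" a] conj_sub[of u "mat 1 - a" b] conj_one[OF u] by simp
    have ha': "adj (adj u ** a ** u) = adj u ** a ** u" using adj_conj A(1) by simp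
    have ta': "mtrace (adj u ** a ** u) = 1" using trace_conj[OF u] A(2) by simp
    have hb': "adj (adj u ** b ** u) = adj u ** b ** u" using adj_conj B(1) by simp
    have tb': "mtrace (adj u ** b ** u) = 1" using trace_conj[OF u] B(2) by simp
    obtain t \<alpha> where a': "adj u ** a ** u = mat2 (of_real t) \<alpha> (cnj \<alpha>) (of_real (1 - t))"
      using herm_tr1_form[OF ha' ta'] by blast
    obtain s \<beta> where b': "adj u ** b ** u = mat2 (of_real s) \<beta> (cnj \<beta>) (of_real (1 - s))"
      using herm_tr1_form[OF hb' tb'] by blast
    have "(mat 1 - adj u ** a ** u - adj u ** b ** u) $ 1 $ 2 = 0" using e2 u12 by simp
    hence "0 - \<alpha> - \<beta> = 0" unfolding a' b' mat2_mat mat2_sub mat2_nth .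
    hence \<beta>: "\<beta> = - \<alpha>" by (simp add: algebra_simps)
    note b'' = b'[unfolded \<beta>]
    have "of_real (t * (1 - t) - (cmod \<alpha>)^2) = det a"
      using det_unitary_conj[OF u, of a] unfolding a' det_tr1 .
    hence "Re (det a) = t * (1 - t) - (cmod \<alpha>)^2" by (metis Re_complex_of_real)
    hence da: "0 < t * (1 - t) - (cmod \<alpha>)^2" using A(3) by simp
    have "of_real (s * (1 - s) - (cmod (- \<alpha>))^2) = det b"
      using det_unitary_conj[OF u, of b] unfolding b'' det_tr1 .
    hence "Re (det b) = s * (1 - s) - (cmod \<alpha>)^2" by (metis Re_complex_of_real norm_minus_cancel)
    hence db: "0 < s * (1 - s) - (cmod \<alpha>)^2" using B(3) by simp
    have eq: "sqrt ((t - s)^2 + 4 * (cmod \<alpha>)^2) + sqrt ((1 - t - s)^2) = 1"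
      using ac AC_conj[OF A(1) B(1) A(2) B(2) u] unfolding a' b'' det_diff_explicit det_sum_explicit
      by simp
    have R: "0 < (cmod \<alpha>)^2 \<and> 0 < t \<and> t < 1 \<and> 0 < s \<and> s < 1 \<and>
        (s = (cmod \<alpha>)^2 / t \<or> s = 1 - (cmod \<alpha>)^2 / (1 - t))"
      using real_fwd[OF eq] da db by simp
    hence "- \<alpha> \<noteq> 0" by auto
    thus "\<exists>u \<alpha> (t::real) (s::real). unitary u
       \<and> adj u ** a ** u = mat2 (of_real t) \<alpha> (cnj \<alpha>) (of_real (1 - t))
       \<and> adj u ** b ** u = mat2 (of_real s) (- \<alpha>) (cnj (- \<alpha>)) (of_real (1 - s))
       \<and> - \<alpha> \<noteq> 0 \<and> 0 < s \<and> s < 1 \<and> 0 < t \<and> t < 1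
       \<and> (cmod \<alpha>)\<^sup>2 < t * (1 - t)
       \<and> (s = (cmod \<alpha>)\<^sup>2 / t \<or> s = 1 - (cmod \<alpha>)\<^sup>2 / (1 - t))"
      using u a' b'' R da by (intro exI[of _ u] exI[of _ \<alpha>] exI[of _ t] exI[of _ s]) simp
  next
    assume "\<exists>u \<alpha> (t::real) (s::real). unitary u
       \<and> adj u ** a ** u = mat2 (of_real t) \<alpha> (cnj \<alpha>) (of_real (1 - t))
       \<and> adj u ** b ** u = mat2 (of_real s) (- \<alpha>) (cnj (- \<alpha>)) (of_real (1 - s))
       \<and> - \<alpha> \<noteq> 0 \<and> 0 < s \<and> s < 1 \<and> 0 < t \<and> t < 1
       \<and> (cmod \<alpha>)\<^sup>2 < t * (1 - t)
       \<and> (s = (cmod \<alpha>)\<^sup>2 / t \<or> s = 1 - (cmod \<alpha>)\<^sup>2 / (1 - t))"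
    then obtain u \<alpha> t s where u: "unitary u"
      and a': "adj u ** a ** u = mat2 (of_real t) \<alpha> (cnj \<alpha>) (of_real (1 - t))"
      and b': "adj u ** b ** u = mat2 (of_real s) (- \<alpha>) (cnj (- \<alpha>)) (of_real (1 - s))"
      and c: "0 < t" "t < 1" "(cmod \<alpha>)\<^sup>2 < t * (1 - t)"
        "s = (cmod \<alpha>)\<^sup>2 / t \<or> s = 1 - (cmod \<alpha>)\<^sup>2 / (1 - t)"
      by blast
    have "sqrt ((t - s)^2 + 4 * (cmod \<alpha>)^2) + sqrt ((1 - t - s)^2) = 1"
      using real_back[OF c(1,2,3) _ c(4)] by simp
    thus "abs_compatible a b"
      using AC_conj[OF A(1) B(1) A(2) B(2) u] unfolding a' b' det_diff_explicit det_sum_explicit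
      by simp
  qed
qed

end
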